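(* Let $n\ge2$, $0<\alpha_1\le\dots\le\alpha_m$ with $\sum\alpha_j=1$, $(A,\tau)=(\mathbb{C}p_1\oplus\cdots\oplus\mathbb{C}p_m,\tau_1)*(\mathbb{M}_n,tr_n)$ the reduced free product with $\tau_1(p_j)=\alpha_j$, $\{e_{ij}\}$ matrix units of $\mathbb{M}_n$, $u=\sum_{i=1}^{n-1}e_{i,i+1}+e_{n,1}$, $B=C^*(\{u^kp_ju^{-k}:0\le k\le n-1,1\le j\le m\}\cup\{e_{11},\dots,e_{nn}\})$, and for an integer $l$ with $l\mid n$, $1<l<n$, $E=C^*(\{u^kp_ju^{-k}:0\le k\le l-1,1\le j\le m\}\cup\{e_{11},\dots,e_{nn}\}\cup\{u^l,u^{2l},\dots,u^{n-l}\})$. Then (1) for $b\in B$ and $0<k\le n-1$, $\tau(bu^k)=0$ and $\tau(u^kb)=0$; (2) for $e\in E$ and $0<k\le l-1$, $\tau(eu^k)=0$ and $\tau(u^ke)=0$.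
   Context: Reduced free product: the unique unital $C^*$-algebra with state generated by unital copies of the factors, restricting to the given traces, in which they are free, with faithful GNS representation; $\tau$ is a faithful trace. $tr_n$ is the normalized trace on $\mathbb{M}_n$. *)

theory Defs
  imports "HOL-Analysis.Analysis"
begin

text \<open>A unital C*-algebra structure on a real Banach algebra with unit:
  sc is complex scalar multiplication (extending the real one), st is the involution.\<close>
definition cstar_algebra ::
  "(complex \<Rightarrow> 'a::{banach,real_normed_algebra_1} \<Rightarrow> 'a) \<Rightarrow> ('a \<Rightarrow> 'a) \<Rightarrow> bool" where
  "cstar_algebra sc st \<longleftrightarrow>
     (\<forall>r x. sc (complex_of_real r) x = scaleR r x) \<and>
     (\<forall>a b x. sc (a + b) x = sc a x + sc b x) \<and>
     (\<forall>a x y. sc a (x + y) = sc a x + sc a y) \<and>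
     (\<forall>a b x. sc (a * b) x = sc a (sc b x)) \<and>
     (\<forall>a x. norm (sc a x) = cmod a * norm x) \<and>
     (\<forall>a x y. sc a (x * y) = sc a x * y \<and> sc a (x * y) = x * sc a y) \<and>
     (\<forall>x y. st (x + y) = st x + st y) \<and>
     (\<forall>a x. st (sc a x) = sc (cnj a) (st x)) \<and>
     (\<forall>x y. st (x * y) = st y * st x) \<and>
     (\<forall>x. st (st x) = x) \<and>
     (\<forall>x. norm (st x * x) = norm x ^ 2)"

definition faithful_tracial_state ::
  "(complex \<Rightarrow> 'a::{banach,real_normed_algebra_1} \<Rightarrow> 'a) \<Rightarrow> ('a \<Rightarrow> 'a) \<Rightarrow> ('a \<Rightarrow> complex) \<Rightarrow> bool" where
  "faithful_tracial_state sc st \<tau> \<longleftrightarrow>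
     (\<forall>x y. \<tau> (x + y) = \<tau> x + \<tau> y) \<and>
     (\<forall>a x. \<tau> (sc a x) = a * \<tau> x) \<and>
     \<tau> 1 = 1 \<and>
     (\<forall>x. \<tau> (st x * x) \<in> \<real> \<and> Re (\<tau> (st x * x)) \<ge> 0) \<and>
     (\<forall>x. \<tau> (st x * x) = 0 \<longrightarrow> x = 0) \<and>
     (\<forall>x y. \<tau> (x * y) = \<tau> (y * x))"

definition star_subalgebra ::
  "(complex \<Rightarrow> 'a::{banach,real_normed_algebra_1} \<Rightarrow> 'a) \<Rightarrow> ('a \<Rightarrow> 'a) \<Rightarrow> 'a set \<Rightarrow> bool" where
  "star_subalgebra sc st C \<longleftrightarrow>
     0 \<in> C \<and> (\<forall>x\<in>C. \<forall>y\<in>C. x + y \<in> C \<and> x * y \<in> C) \<and>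
     (\<forall>a. \<forall>x\<in>C. sc a x \<in> C) \<and> (\<forall>x\<in>C. st x \<in> C)"

definition cstar_gen ::
  "(complex \<Rightarrow> 'a::{banach,real_normed_algebra_1} \<Rightarrow> 'a) \<Rightarrow> ('a \<Rightarrow> 'a) \<Rightarrow> 'a set \<Rightarrow> 'a set" where
  "cstar_gen sc st S = \<Inter>{C. closed C \<and> star_subalgebra sc st C \<and> S \<subseteq> C}"

definition oprod :: "(nat \<Rightarrow> 'a::monoid_mult) \<Rightarrow> nat \<Rightarrow> 'a" where
  "oprod a k = foldr (*) (map a [0..<k]) 1"

definition free_pair :: "('a::monoid_mult \<Rightarrow> complex) \<Rightarrow> 'a set \<Rightarrow> 'a set \<Rightarrow> bool" where
  "free_pair \<tau> A1 A2 \<longleftrightarrow>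
     (\<forall>k::nat. \<forall>a::nat \<Rightarrow> 'a. \<forall>\<iota>::nat \<Rightarrow> bool.
        k \<ge> 1 \<and>
        (\<forall>i<k. a i \<in> (if \<iota> i then A1 else A2) \<and> \<tau> (a i) = 0) \<and>
        (\<forall>i. Suc i < k \<longrightarrow> \<iota> i \<noteq> \<iota> (Suc i))
        \<longrightarrow> \<tau> (oprod a k) = 0)"

end

theory Submission
  imports Defs
begin

locale fp =
  fixes sc :: "complex \<Rightarrow> 'a::{banach,real_normed_algebra_1} \<Rightarrow> 'a"
    and st :: "'a \<Rightarrow> 'a" and \<tau> :: "'a \<Rightarrow> complex"
    and n m :: nat
    and p :: "nat \<Rightarrow> 'a" and e :: "nat \<Rightarrow> nat \<Rightarrow> 'a"
  assumes cstar: "cstar_algebra sc st"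
    and state: "faithful_tracial_state sc st \<tau>"
    and tau_cont: "continuous_on UNIV \<tau>"
    and n2: "n \<ge> 2"
    and p_proj: "\<forall>j\<in>{1..m}. st (p j) = p j \<and> p j * p j = p j"
    and p_orth: "\<forall>j\<in>{1..m}. \<forall>j'\<in>{1..m}. j \<noteq> j' \<longrightarrow> p j * p j' = 0"
    and p_sum: "(\<Sum>j=1..m. p j) = 1"
    and e_mult: "\<forall>i\<in>{1..n}. \<forall>j\<in>{1..n}. \<forall>k\<in>{1..n}. \<forall>l\<in>{1..n}.
                   e i j * e k l = (if j = k then e i l else 0)"
    and e_star: "\<forall>i\<in>{1..n}. \<forall>j\<in>{1..n}. st (e i j) = e j i"
    and e_sum: "(\<Sum>i=1..n. e i i) = 1"
    and tau_e: "\<forall>i\<in>{1..n}. \<forall>j\<in>{1..n}. \<tau> (e i j) = (if i = j then 1 / of_nat n else 0)"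
    and free: "free_pair \<tau> {(\<Sum>j=1..m. sc (c j) (p j)) | c. True}
                           {(\<Sum>i=1..n. \<Sum>j=1..n. sc (c i j) (e i j)) | c. True}"
begin

lemma sc_real: "sc (complex_of_real r) x = r *\<^sub>R x" using cstar unfolding cstar_algebra_def by auto
lemma sc_addl: "sc (a + b) x = sc a x + sc b x" using cstar unfolding cstar_algebra_def by auto
lemma sc_addr: "sc a (x + y) = sc a x + sc a y" using cstar unfolding cstar_algebra_def by auto
lemma sc_sc: "sc a (sc b x) = sc (a * b) x" using cstar unfolding cstar_algebra_def by auto
lemma sc_norm: "norm (sc a x) = cmod a * norm x" using cstar unfolding cstar_algebra_def by auto
lemma sc_multl: "sc a x * y = sc a (x * y)" using cstar unfolding cstar_algebra_def by auto
lemma sc_multr: "x * sc a y = sc a (x * y)" using cstar unfolding cstar_algebra_def by (metis (no_types))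
lemma st_add: "st (x + y) = st x + st y" using cstar unfolding cstar_algebra_def by auto
lemma st_sc: "st (sc a x) = sc (cnj a) (st x)" using cstar unfolding cstar_algebra_def by auto
lemma st_mult: "st (x * y) = st y * st x" using cstar unfolding cstar_algebra_def by auto
lemma st_st: "st (st x) = x" using cstar unfolding cstar_algebra_def by auto
lemma cid: "norm (st x * x) = norm x ^ 2" using cstar unfolding cstar_algebra_def by auto

lemma tau_add: "\<tau> (x + y) = \<tau> x + \<tau> y" using state unfolding faithful_tracial_state_def by auto
lemma tau_sc: "\<tau> (sc a x) = a * \<tau> x" using state unfolding faithful_tracial_state_def by auto
lemma tau_1: "\<tau> 1 = 1" using state unfolding faithful_tracial_state_def by auto
lemma tau_comm: "\<tau> (x * y) = \<tau> (y * x)" using state unfolding faithful_tracial_state_def by auto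

lemma sc_1: "sc 1 x = x" using sc_real[of 1 x] by simp
lemma sc_0r: "sc a 0 = 0" using sc_addr[of a 0 0] by simp
lemma sc_0l: "sc 0 x = 0" using sc_addl[of 0 0 x] by simp
lemma sc_m1: "sc (-1) x = - x" using sc_real[of "-1" x] by simp
lemma sc_sum: "sc a (sum f A) = (\<Sum>i\<in>A. sc a (f i))"
  by (induction A rule: infinite_finite_induct) (auto simp: sc_0r sc_addr)
lemma sc_suml: "sc (sum f A) x = (\<Sum>i\<in>A. sc (f i) x)"
  by (induction A rule: infinite_finite_induct) (auto simp: sc_0l sc_addl)
lemma sc_diff: "sc a (x - y) = sc a x - sc a y"
proof -
  have "sc a (x - y) + sc a y = sc a x" by (metis diff_add_cancel sc_addr)
  thus ?thesis by (metis add_diff_cancel)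
qed
lemma sc_diffl: "sc (a - b) x = sc a x - sc b x"
  by (metis add_diff_cancel diff_add_cancel sc_addl)
lemma tau_0: "\<tau> 0 = 0" using tau_add[of 0 0] by simp
lemma tau_sum: "\<tau> (sum f A) = (\<Sum>i\<in>A. \<tau> (f i))"
  by (induction A rule: infinite_finite_induct) (auto simp: tau_0 tau_add)
lemma tau_diff: "\<tau> (x - y) = \<tau> x - \<tau> y"
  by (metis add_diff_cancel diff_add_cancel tau_add)
lemma st_0: "st 0 = 0" using st_add[of 0 0] by simp
lemma st_1: "st 1 = 1" by (metis mult_1_left mult_1_right st_mult st_st)
lemma st_sum: "st (sum f A) = (\<Sum>i\<in>A. st (f i))"
  by (induction A rule: infinite_finite_induct) (auto simp: st_0 st_add)
lemma st_real: "st (r *\<^sub>R x) = r *\<^sub>R st x"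
  by (metis Reals_cnj_iff Reals_of_real sc_real st_sc)

lemma st_norm: "norm (st x) \<le> norm x"
proof -
  have a: "norm y \<le> norm (st y)" for y
  proof (cases "y = 0")
    case False
    have "norm y ^ 2 \<le> norm (st y) * norm y" using cid[of y] norm_mult_ineq[of "st y" y] by simp
    thus ?thesis using False by (simp add: power2_eq_square)
  qed simp
  show ?thesis using a[of "st x"] st_st by simp
qed

lemma bl_st: "bounded_linear st"
  by (rule bounded_linear_intro[where K=1]) (auto simp: st_add st_real st_norm)
lemma bl_sc: "bounded_linear (sc a)"
  apply (rule bounded_linear_intro[where K="cmod a"])
  apply (auto simp: sc_addr sc_norm sc_sc simp flip: sc_real)
  by (simp add: mult.commute)

lemma sc_if: "sc (if P then a else b) x = (if P then sc a x else sc b x)" by simp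
lemma sc_if1: "sc (if P then 1 else 0) x = (if P then x else 0)" by (simp add: sc_1 sc_0l)
lemma sc_if0: "sc (if P then a else 0) x = (if P then sc a x else 0)" by (simp add: sc_0l)

definition pv :: "(nat \<Rightarrow> complex) \<Rightarrow> 'a" where
  "pv c = (\<Sum>j=1..m. sc (c j) (p j))"
definition mat :: "(nat \<Rightarrow> nat \<Rightarrow> complex) \<Rightarrow> 'a" where
  "mat c = (\<Sum>i=1..n. \<Sum>j=1..n. sc (c i j) (e i j))"

lemma pv_mult: "pv c * pv d = pv (\<lambda>j. c j * d j)"
proof -
  have "pv c * pv d = (\<Sum>j=1..m. \<Sum>k=1..m. sc (c j) (p j) * sc (d k) (p k))"
    unfolding pv_def by (simp add: sum_product)
  also have "\<dots> = (\<Sum>j=1..m. \<Sum>k=1..m. sc (c j * d k) (p j * p k))"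
    by (simp only: sc_multl sc_multr sc_sc mult.commute)
  also have "\<dots> = (\<Sum>j=1..m. \<Sum>k=1..m. if k = j then sc (c j * d k) (p j) else 0)"
    using p_proj p_orth by (intro sum.cong refl) (auto simp: sc_0r)
  also have "\<dots> = pv (\<lambda>j. c j * d j)" unfolding pv_def by (simp add: sum.delta)
  finally show ?thesis .
qed

lemma pv_one: "pv (\<lambda>_. a) = sc a 1"
proof -
  have "pv (\<lambda>_. a) = sc a (\<Sum>j=1..m. p j)" unfolding pv_def by (simp add: sc_sum)
  thus ?thesis using p_sum by simp
qed

lemma pv_diff: "pv c - sc a 1 = pv (\<lambda>j. c j - a)"
  unfolding pv_def by (simp add: sc_diffl sum_subtractf flip: pv_one[unfolded pv_def])

lemma pv_st: "st (pv c) = pv (\<lambda>j. cnj (c j))"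
  unfolding pv_def using p_proj by (auto simp: st_sum st_sc intro!: sum.cong)

lemma pv_p: "j \<in> {1..m} \<Longrightarrow> p j = pv (\<lambda>j'. if j' = j then 1 else 0)"
  unfolding pv_def by (simp add: sc_if sc_0l sc_1 sum.delta cong: if_cong)

lemma mat_mult: "mat c * mat d = mat (\<lambda>i l. \<Sum>j=1..n. c i j * d j l)"
proof -
  have "mat c * mat d = (\<Sum>i=1..n. \<Sum>j=1..n. \<Sum>k=1..n. \<Sum>l=1..n. sc (c i j) (e i j) * sc (d k l) (e k l))"
  proof -
    have "mat c * mat d = (\<Sum>i=1..n. \<Sum>j=1..n. sc (c i j) (e i j) * mat d)"
      unfolding mat_def[of c] by (simp add: sum_distrib_right)
    thus ?thesis unfolding mat_def[of d] by (simp add: sum_distrib_left)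
  qed
  also have "\<dots> = (\<Sum>i=1..n. \<Sum>j=1..n. \<Sum>k=1..n. \<Sum>l=1..n. sc (c i j * d k l) (e i j * e k l))"
    by (simp only: sc_multl sc_multr sc_sc mult.commute)
  also have "\<dots> = (\<Sum>i=1..n. \<Sum>j=1..n. \<Sum>k=1..n. \<Sum>l=1..n. if k = j then sc (c i j * d k l) (e i l) else 0)"
    using e_mult by (intro sum.cong refl) (auto simp: sc_0r)
  also have "\<dots> = (\<Sum>i=1..n. \<Sum>j=1..n. \<Sum>l=1..n. sc (c i j * d j l) (e i l))"
  proof (rule sum.cong[OF refl], rule sum.cong[OF refl])
    fix i j assume j: "j \<in> {1..n}"
    show "(\<Sum>k=1..n. \<Sum>l=1..n. if k = j then sc (c i j * d k l) (e i l) else 0) = (\<Sum>l=1..n. sc (c i j * d j l) (e i l))"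
      apply (subst sum.swap) using j by (simp add: sum.delta)
  qed
  also have "\<dots> = (\<Sum>i=1..n. \<Sum>l=1..n. \<Sum>j=1..n. sc (c i j * d j l) (e i l))"
    by (rule sum.cong[OF refl], rule sum.swap)
  also have "\<dots> = mat (\<lambda>i l. \<Sum>j=1..n. c i j * d j l)"
    unfolding mat_def by (simp add: sc_suml)
  finally show ?thesis .
qed

lemma mat_one: "sc a 1 = mat (\<lambda>i j. if i = j then a else 0)"
proof -
  have "mat (\<lambda>i j. if i = j then a else 0) = (\<Sum>i=1..n. sc a (e i i))"
    unfolding mat_def by (simp add: sc_if sc_0l sum.delta cong: if_cong)
  also have "\<dots> = sc a 1" unfolding sc_sum[symmetric] e_sum ..
  finally show ?thesis ..
qed

lemma mat_diff: "mat c - sc a 1 = mat (\<lambda>i j. c i j - (if i = j then a else 0))"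
  unfolding mat_one unfolding mat_def by (simp add: sc_diffl sum_subtractf)

lemma mat_st: "st (mat c) = mat (\<lambda>i j. cnj (c j i))"
  unfolding mat_def using e_star by (auto simp: st_sum st_sc intro!: sum.cong sum.swap)

lemma tau_mat: "\<tau> (mat c) = (\<Sum>i=1..n. c i i) / of_nat n"
proof -
  have "\<tau> (mat c) = (\<Sum>i=1..n. \<Sum>j=1..n. c i j * \<tau> (e i j))"
    unfolding mat_def by (simp add: tau_sum tau_sc)
  also have "\<dots> = (\<Sum>i=1..n. \<Sum>j=1..n. if j = i then c i j / of_nat n else 0)"
    using tau_e by (intro sum.cong[OF refl]) auto
  also have "\<dots> = (\<Sum>i=1..n. c i i) / of_nat n"
    by (simp add: sum.delta sum_divide_distrib)
  finally show ?thesis .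
qed

lemma e_mat:
  assumes i: "i \<in> {1..n}" and j: "j \<in> {1..n}"
  shows "e i j = mat (\<lambda>a b. if a = i then (if b = j then 1 else 0) else 0)"
proof -
  have *: "(\<Sum>ja=1..n. sc (if x = i then if ja = j then 1 else 0 else 0) (e x ja)) = (if x = i then e i j else 0)" for x
    using j by (cases "x = i") (simp_all add: sc_if1 sc_0l sum.delta)
  have "mat (\<lambda>a b. if a = i then (if b = j then 1 else 0) else 0) = (\<Sum>x=1..n. if x = i then e i j else 0)"
    unfolding mat_def by (rule sum.cong[OF refl]) (rule *)
  also have "\<dots> = e i j" using i by (simp add: sum.delta)
  finally show ?thesis ..
qed

definition homog :: "int \<Rightarrow> (nat \<Rightarrow> nat \<Rightarrow> complex) \<Rightarrow> bool" where
  "homog d c \<longleftrightarrow> (\<forall>i\<in>{1..n}. \<forall>j\<in>{1..n}. c i j \<noteq> 0 \<longrightarrow> int n dvd (int j - int i - d))"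

definition V :: "bool \<Rightarrow> int \<Rightarrow> 'a set" where
  "V t d = (if t then {x. d = 0 \<and> (\<exists>c. x = pv c)} else {x. \<exists>c. homog d c \<and> x = mat c})"

lemma homog_mult:
  assumes "homog d c" "homog d' c'"
  shows "homog (d + d') (\<lambda>i l. \<Sum>j=1..n. c i j * c' j l)"
  unfolding homog_def
proof (intro ballI impI)
  fix i l assume i: "i \<in> {1..n}" and l: "l \<in> {1..n}" and nz: "(\<Sum>j=1..n. c i j * c' j l) \<noteq> 0"
  then obtain j where j: "j \<in> {1..n}" and "c i j * c' j l \<noteq> 0"
    by (meson sum.not_neutral_contains_not_neutral)
  hence "c i j \<noteq> 0" "c' j l \<noteq> 0" by auto
  hence "int n dvd (int j - int i - d)" "int n dvd (int l - int j - d')"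
    using assms i j l unfolding homog_def by auto
  hence "int n dvd ((int j - int i - d) + (int l - int j - d'))" by (rule dvd_add)
  thus "int n dvd (int l - int i - (d + d'))" by (simp add: algebra_simps)
qed

lemma V_mult: "x \<in> V t d \<Longrightarrow> y \<in> V t d' \<Longrightarrow> x * y \<in> V t (d + d')"
  unfolding V_def by (cases t) (auto simp: pv_mult mat_mult intro: homog_mult)

lemma V_tau: "x \<in> V t d \<Longrightarrow> \<not> int n dvd d \<Longrightarrow> \<tau> x = 0"
proof (cases t)
  case False
  assume "x \<in> V t d" "\<not> int n dvd d"
  then obtain c where h: "homog d c" and x: "x = mat c" using False unfolding V_def by auto
  have "c i i = 0" if "i \<in> {1..n}" for i
    using h that \<open>\<not> int n dvd d\<close> unfolding homog_def by force
  thus ?thesis unfolding x tau_mat by simp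
qed (auto simp: V_def)

lemma V_center: "x \<in> V t d \<Longrightarrow> int n dvd d \<Longrightarrow> x - sc (\<tau> x) 1 \<in> V t d"
proof (cases t)
  case True
  assume "x \<in> V t d"
  thus ?thesis using True unfolding V_def by (auto simp: pv_diff)
next
  case False
  assume "x \<in> V t d" "int n dvd d"
  then obtain c where h: "homog d c" and x: "x = mat c" using False unfolding V_def by auto
  have "homog d (\<lambda>i j. c i j - (if i = j then \<tau> x else 0))"
    using h \<open>int n dvd d\<close> unfolding homog_def by (auto simp: dvd_minus_iff)
  thus ?thesis using False unfolding V_def x mat_diff by auto
qed

definition A1 where "A1 = {(\<Sum>j=1..m. sc (c j) (p j)) | c. True}"
definition A2 where "A2 = {(\<Sum>i=1..n. \<Sum>j=1..n. sc (c i j) (e i j)) | c. True}"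

lemma V_sub: "x \<in> V t d \<Longrightarrow> x \<in> (if t then A1 else A2)"
  unfolding V_def A1_def A2_def pv_def mat_def by (cases t) auto

lemma V_st: "x \<in> V t d \<Longrightarrow> st x \<in> V t (- d)"
proof (cases t)
  case True
  assume "x \<in> V t d"
  thus ?thesis using True unfolding V_def by (auto simp: pv_st)
next
  case False
  assume "x \<in> V t d"
  then obtain c where h: "homog d c" and x: "x = mat c" using False unfolding V_def by auto
  have "homog (-d) (\<lambda>i j. cnj (c j i))"
    unfolding homog_def
  proof (intro ballI impI)
    fix i j assume i: "i \<in> {1..n}" and j: "j \<in> {1..n}" and "cnj (c j i) \<noteq> 0"
    hence "int n dvd (int i - int j - d)" using h unfolding homog_def by auto
    hence "int n dvd - (int i - int j - d)" by (simp only: dvd_minus_iff)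
    thus "int n dvd (int j - int i - - d)" by (simp add: algebra_simps)
  qed
  thus ?thesis using False unfolding V_def x mat_st by auto
qed

definition valid :: "bool \<times> 'a \<times> int \<Rightarrow> bool" where
  "valid y \<longleftrightarrow> fst (snd y) \<in> V (fst y) (snd (snd y))"
definition prd :: "(bool \<times> 'a \<times> int) list \<Rightarrow> 'a" where
  "prd ys = prod_list (map (\<lambda>y. fst (snd y)) ys)"
definition dsum :: "(bool \<times> 'a \<times> int) list \<Rightarrow> int" where
  "dsum ys = sum_list (map (\<lambda>y. snd (snd y)) ys)"
abbreviation alt :: "(bool \<times> 'a \<times> int) list \<Rightarrow> bool" where
  "alt ys \<equiv> successively (\<lambda>a b. fst a \<noteq> fst b) ys"

lemma prd_simps[simp]: "prd [] = 1" "prd (y # ys) = fst (snd y) * prd ys" "prd (xs @ ys) = prd xs * prd ys"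
  unfolding prd_def by auto
lemma dsum_simps[simp]: "dsum [] = 0" "dsum (y # ys) = snd (snd y) + dsum ys" "dsum (xs @ ys) = dsum xs + dsum ys"
  unfolding dsum_def by auto

lemma free_alt:
  assumes "alt ys" "ys \<noteq> []" "\<forall>y\<in>set ys. valid y \<and> \<tau> (fst (snd y)) = 0"
  shows "\<tau> (prd ys) = 0"
proof -
  define a where "a i = fst (snd (ys ! i))" for i
  define \<iota> where "\<iota> i = fst (ys ! i)" for i
  have "\<tau> (oprod a (length ys)) = 0"
    using free unfolding free_pair_def A1_def[symmetric] A2_def[symmetric]
  proof (elim allE impE)
    show "1 \<le> length ys \<and> (\<forall>i<length ys. a i \<in> (if \<iota> i then A1 else A2) \<and> \<tau> (a i) = 0) \<and>
      (\<forall>i. Suc i < length ys \<longrightarrow> \<iota> i \<noteq> \<iota> (Suc i))"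
    proof (intro conjI allI impI)
      show "1 \<le> length ys" using assms(2) by (cases ys) auto
    next
      fix i assume "i < length ys"
      hence "ys ! i \<in> set ys" by simp
      thus "a i \<in> (if \<iota> i then A1 else A2)" "\<tau> (a i) = 0"
        using assms(3) V_sub unfolding a_def \<iota>_def valid_def by blast+
    next
      fix i assume "Suc i < length ys"
      thus "\<iota> i \<noteq> \<iota> (Suc i)" using assms(1) successively_nth unfolding \<iota>_def by blast
    qed
  qed
  moreover have "oprod a (length ys) = prd ys"
  proof -
    have "map a [0..<length ys] = map (\<lambda>y. fst (snd y)) ys"
      unfolding a_def by (rule nth_equalityI) auto
    thus ?thesis unfolding oprod_def prd_def by (simp add: prod_list.eq_foldr)
  qed
  ultimately show ?thesis by simp
qed

lemma alt_map: "alt ys \<longleftrightarrow> successively (\<noteq>) (map fst ys)"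
  by (simp add: successively_map)

lemma mu_less:
  assumes "length zs < length ys"
  shows "length zs * (length zs + 1) + length (filter P zs) < length ys * (length ys + 1) + length (filter Q ys)"
proof -
  let ?a = "length zs" and ?b = "length ys"
  have "length (filter P zs) \<le> ?a" by simp
  moreover have "?a * (?a + 1) + ?a < (?a + 1) * (?a + 2)" by simp
  moreover have "(?a + 1) * (?a + 2) \<le> ?b * (?b + 1)" using assms by (intro mult_le_mono) auto
  ultimately show ?thesis by linarith
qed

lemma key:
  "alt ys \<Longrightarrow> \<forall>y\<in>set ys. valid y \<Longrightarrow> \<not> int n dvd dsum ys \<Longrightarrow> \<tau> (prd ys) = 0"
proof (induction "length ys * (length ys + 1) + length (filter (\<lambda>y. \<tau> (fst (snd y)) \<noteq> 0) ys)"
    arbitrary: ys rule: less_induct)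
  case (less ys)
  note IH = less.hyps
  show ?case
  proof (cases "\<forall>y\<in>set ys. \<tau> (fst (snd y)) = 0")
    case True
    have "ys \<noteq> []" using less.prems(3) by auto
    thus ?thesis using free_alt less.prems True by blast
  next
    case False
    then obtain y where y: "y \<in> set ys" "\<tau> (fst (snd y)) \<noteq> 0" by auto
    then obtain pre post where ys: "ys = pre @ y # post" by (meson split_list)
    obtain t x d where yt: "y = (t, x, d)" by (cases y) auto
    have vy: "x \<in> V t d" using less.prems(2) y(1) unfolding yt valid_def by auto
    have nd: "int n dvd d" using V_tau vy y(2) yt by auto
    define c where "c = \<tau> x"
    define x' where "x' = x - sc c 1"
    have vx': "x' \<in> V t d" using V_center vy nd unfolding x'_def c_def by blast
    have tx': "\<tau> x' = 0" unfolding x'_def c_def by (simp add: tau_diff tau_sc tau_1)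
    define ys1 where "ys1 = pre @ (t, x', d) # post"
    have xx: "x = x' + sc c 1" unfolding x'_def by simp
    have split: "prd ys = prd ys1 + sc c (prd pre * prd post)"
      unfolding ys ys1_def yt xx by (simp add: distrib_left distrib_right sc_multl sc_multr)
    have t1: "\<tau> (prd ys1) = 0"
    proof (rule IH)
      show "length ys1 * (length ys1 + 1) + length (filter (\<lambda>y. \<tau> (fst (snd y)) \<noteq> 0) ys1)
          < length ys * (length ys + 1) + length (filter (\<lambda>y. \<tau> (fst (snd y)) \<noteq> 0) ys)"
        unfolding ys ys1_def yt using tx' y(2) yt by simp
      show "alt ys1" using less.prems(1) unfolding alt_map ys ys1_def yt by simp
      show "\<forall>y\<in>set ys1. valid y" using less.prems(2) vx' unfolding ys ys1_def valid_def by auto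
      show "\<not> int n dvd dsum ys1" using less.prems(3) unfolding ys ys1_def yt by simp
    qed
    have t2: "\<tau> (prd pre * prd post) = 0"
    proof (cases "pre = [] \<or> post = []")
      case True
      define zs where "zs = pre @ post"
      have "\<tau> (prd zs) = 0"
      proof (rule IH)
        show "length zs * (length zs + 1) + length (filter (\<lambda>y. \<tau> (fst (snd y)) \<noteq> 0) zs)
          < length ys * (length ys + 1) + length (filter (\<lambda>y. \<tau> (fst (snd y)) \<noteq> 0) ys)"
          by (rule mu_less) (simp add: zs_def ys)
        show "alt zs" using less.prems(1) True unfolding alt_map ys zs_def
          by (auto simp: successively_append_iff successively_Cons)
        show "\<forall>y\<in>set zs. valid y" using less.prems(2) unfolding ys zs_def by auto
        show "\<not> int n dvd dsum zs"
        proof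
          assume "int n dvd dsum zs"
          hence "int n dvd dsum zs + d" using nd by simp
          thus False using less.prems(3) unfolding ys zs_def yt by (simp add: algebra_simps)
        qed
      qed
      thus ?thesis unfolding zs_def by simp
    next
      case False
      then obtain pre' a where pre: "pre = pre' @ [a]" by (metis rev_exhaust)
      obtain b post' where post: "post = b # post'" using False by (cases post) auto
      have ab: "fst a \<noteq> t" "t \<noteq> fst b" using less.prems(1) unfolding alt_map ys pre post yt
        by (auto simp: successively_append_iff successively_Cons)
      hence tab: "fst b = fst a" by auto
      define zs where "zs = pre' @ (fst a, fst (snd a) * fst (snd b), snd (snd a) + snd (snd b)) # post'"
      have "\<tau> (prd zs) = 0"
      proof (rule IH)
        show "length zs * (length zs + 1) + length (filter (\<lambda>y. \<tau> (fst (snd y)) \<noteq> 0) zs)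
          < length ys * (length ys + 1) + length (filter (\<lambda>y. \<tau> (fst (snd y)) \<noteq> 0) ys)"
          by (rule mu_less) (simp add: zs_def ys pre post)
        have h: "successively (\<noteq>) ((map fst pre' @ [fst a]) @ (t # fst b # map fst post'))"
          using less.prems(1) unfolding alt_map ys pre post yt by simp
        hence h1: "successively (\<noteq>) (map fst pre' @ [fst a])"
          and h2: "successively (\<noteq>) (fst b # map fst post')"
          by (simp_all only: successively_append_iff successively_Cons list.simps) blast+
        have "successively (\<noteq>) ((map fst pre' @ [fst a]) @ map fst post')"
        proof -
          have h3: "successively (\<noteq>) (map fst post')" using h2 by (cases post') simp_all
          have h4: "map fst post' = [] \<or> last (map fst pre' @ [fst a]) \<noteq> hd (map fst post')"
            using h2 tab by (cases post') simp_all
          show ?thesis using h1 h3 h4 by (simp only: successively_append_iff) blast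
        qed
        thus "alt zs" unfolding alt_map zs_def by simp
        have "valid a" "valid b" using less.prems(2) unfolding ys pre post by auto
        hence "valid (fst a, fst (snd a) * fst (snd b), snd (snd a) + snd (snd b))"
          unfolding valid_def using tab by (auto intro: V_mult)
        thus "\<forall>y\<in>set zs. valid y" using less.prems(2) unfolding ys zs_def pre post by auto
        show "\<not> int n dvd dsum zs"
        proof
          assume "int n dvd dsum zs"
          hence "int n dvd dsum zs + d" using nd by simp
          thus False using less.prems(3) unfolding ys zs_def yt pre post by (simp add: algebra_simps)
        qed
      qed
      thus ?thesis unfolding zs_def pre post by (simp add: mult.assoc)
    qed
    show ?thesis using split t1 t2 by (simp add: tau_add tau_sc)
  qed
qed

lemma normalize:
  "\<forall>y\<in>set ys. valid y \<Longrightarrow> \<exists>zs. alt zs \<and> (\<forall>z\<in>set zs. valid z) \<and> prd zs = prd ys \<and> dsum zs = dsum ys"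
proof (induction ys)
  case Nil show ?case by (intro exI[of _ "[]"]) simp
next
  case (Cons y ys)
  then obtain zs where zs: "alt zs" "\<forall>z\<in>set zs. valid z" "prd zs = prd ys" "dsum zs = dsum ys" by auto
  show ?case
  proof (cases "zs = [] \<or> fst y \<noteq> fst (hd zs)")
    case True
    have "alt (y # zs)" using True zs(1) by (cases zs) simp_all
    thus ?thesis using zs Cons.prems by (intro exI[of _ "y # zs"]) simp
  next
    case False
    then obtain z zs' where z: "zs = z # zs'" "fst z = fst y" by (cases zs) auto
    define w where "w = (fst y, fst (snd y) * fst (snd z), snd (snd y) + snd (snd z))"
    have vy: "valid y" using Cons.prems by simp
    have vz: "valid z" using zs(2) z by simp
    have vw: "valid w" using vy vz z(2) unfolding w_def valid_def by (auto intro: V_mult)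
    have "alt (w # zs')" using zs(1) z unfolding w_def by (cases zs') simp_all
    moreover have "prd (w # zs') = prd (y # ys)" using zs(3) z unfolding w_def by (simp add: mult.assoc)
    moreover have "dsum (w # zs') = dsum (y # ys)" using zs(4) z unfolding w_def by simp
    moreover have "\<forall>z\<in>set (w # zs'). valid z" using vw zs(2) z by simp
    ultimately show ?thesis by blast
  qed
qed

lemma key2: "\<forall>y\<in>set ys. valid y \<Longrightarrow> \<not> int n dvd dsum ys \<Longrightarrow> \<tau> (prd ys) = 0"
  using normalize key by metis

inductive_set GD :: "int \<Rightarrow> 'a set" for q :: int where
  word: "\<forall>y\<in>set ys. valid y \<Longrightarrow> q dvd dsum ys \<Longrightarrow> prd ys \<in> GD q"
| add: "x \<in> GD q \<Longrightarrow> y \<in> GD q \<Longrightarrow> x + y \<in> GD q"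
| scl: "x \<in> GD q \<Longrightarrow> sc a x \<in> GD q"

lemma GD_0: "0 \<in> GD q"
proof -
  have "prd [] \<in> GD q" by (rule GD.word) auto
  hence "sc 0 (prd []) \<in> GD q" by (rule GD.scl)
  thus ?thesis by (simp add: sc_0l)
qed

lemma GD_mult_word:
  assumes "\<forall>y\<in>set ys. valid y" "q dvd dsum ys"
  shows "z \<in> GD q \<Longrightarrow> prd ys * z \<in> GD q"
proof (induction z rule: GD.induct)
  case (word zs)
  have "prd (ys @ zs) \<in> GD q" using assms word by (intro GD.word) auto
  thus ?case by simp
next
  case (add x y) thus ?case by (simp add: distrib_left GD.add)
next
  case (scl x a) thus ?case by (simp add: sc_multr GD.scl)
qed

lemma GD_mult: "x \<in> GD q \<Longrightarrow> y \<in> GD q \<Longrightarrow> x * y \<in> GD q"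
proof (induction x rule: GD.induct)
  case (word ys) thus ?case by (rule GD_mult_word)
next
  case (add x z) thus ?case by (simp add: distrib_right GD.add)
next
  case (scl x a) thus ?case by (simp add: sc_multl GD.scl)
qed

definition stv :: "bool \<times> 'a \<times> int \<Rightarrow> bool \<times> 'a \<times> int" where
  "stv y = (fst y, st (fst (snd y)), - snd (snd y))"

lemma st_prd: "st (prd ys) = prd (rev (map stv ys))"
  by (induction ys) (simp_all add: st_1 st_mult stv_def)

lemma dsum_stv: "dsum (rev (map stv ys)) = - dsum ys"
  by (induction ys) (simp_all add: stv_def)

lemma GD_st: "x \<in> GD q \<Longrightarrow> st x \<in> GD q"
proof (induction x rule: GD.induct)
  case (word ys)
  have "prd (rev (map stv ys)) \<in> GD q"
  proof (rule GD.word)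
    show "\<forall>y\<in>set (rev (map stv ys)). valid y"
      using word(1) by (auto simp: stv_def valid_def intro: V_st)
    show "q dvd dsum (rev (map stv ys))" using word(2) by (simp add: dsum_stv)
  qed
  thus ?case by (simp add: st_prd)
next
  case (add x y) thus ?case by (simp add: st_add GD.add)
next
  case (scl x a) thus ?case by (simp add: st_sc GD.scl)
qed

lemma prd_rep: "prd (replicate k y) = fst (snd y) ^ k"
  unfolding prd_def by simp
lemma dsum_rep: "dsum (replicate k y) = int k * snd (snd y)"
  unfolding dsum_def by (simp add: sum_list_replicate)

definition uu :: 'a where "uu = (\<Sum>i=1..n-1. e i (i + 1)) + e n 1"
definition cu :: "nat \<Rightarrow> nat \<Rightarrow> complex" where
  "cu i j = (if j = (if i < n then i + 1 else 1) then 1 else 0)"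

lemma uu_mat: "uu = mat cu"
proof -
  define f where "f i = (if i < n then i + 1 else 1)" for i
  have f: "f i \<in> {1..n}" for i using n2 unfolding f_def by auto
  have *: "(\<Sum>j=1..n. sc (cu i j) (e i j)) = e i (f i)" for i
    unfolding cu_def f_def[symmetric] using f[of i] by (simp add: sc_if1 sum.delta)
  have "mat cu = (\<Sum>i=1..n. e i (f i))" unfolding mat_def by (rule sum.cong[OF refl], rule * )
  also have "{1..n} = insert n {1..n-1}" using n2 by auto
  also have "(\<Sum>i\<in>insert n {1..n-1}. e i (f i)) = e n (f n) + (\<Sum>i=1..n-1. e i (f i))"
    by (rule sum.insert) auto
  also have "(\<Sum>i=1..n-1. e i (f i)) = (\<Sum>i=1..n-1. e i (i + 1))"
    by (rule sum.cong) (auto simp: f_def)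
  finally show ?thesis unfolding uu_def f_def by simp
qed

lemma uu_V: "uu \<in> V False 1"
proof -
  have "homog 1 cu" unfolding homog_def cu_def
  proof (intro ballI impI)
    fix i j assume i: "i \<in> {1..n}" and j: "j \<in> {1..n}"
      and nz: "(if j = (if i < n then i + 1 else 1) then 1 else 0 :: complex) \<noteq> 0"
    show "int n dvd (int j - int i - 1)"
    proof (cases "i < n")
      case True thus ?thesis using nz by (simp split: if_splits)
    next
      case False hence "i = n" using i by auto
      thus ?thesis using nz False by (simp split: if_splits)
    qed
  qed
  thus ?thesis unfolding V_def uu_mat by auto
qed

lemma uu_pow: "uu ^ k = prd (replicate k (False, uu, 1))"
  by (simp add: prd_rep)

lemma GD_tau:
  assumes q: "q dvd int n" and k: "0 < k" "int k < q"
  shows "x \<in> GD q \<Longrightarrow> \<tau> (x * uu ^ k) = 0"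
proof (induction x rule: GD.induct)
  case (word ys)
  have "x * uu ^ k = prd (ys @ replicate k (False, uu, 1))" if "x = prd ys" for x
    using that by (simp add: prd_rep)
  moreover have "\<tau> (prd (ys @ replicate k (False, uu, 1))) = 0"
  proof (rule key2)
    show "\<forall>y\<in>set (ys @ replicate k (False, uu, 1)). valid y"
      using word(1) uu_V by (auto simp: valid_def)
    show "\<not> int n dvd dsum (ys @ replicate k (False, uu, 1))"
    proof
      assume "int n dvd dsum (ys @ replicate k (False, uu, 1))"
      hence "q dvd dsum ys + int k" using q by (simp add: dsum_rep dvd_trans)
      hence "q dvd int k" using word(2) by (simp add: dvd_add_right_iff)
      hence "q \<le> int k" using k by (intro zdvd_imp_le) auto
      thus False using k by simp
    qed
  qed
  ultimately show ?case by simp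
next
  case (add x y) thus ?case by (simp add: distrib_right tau_add)
next
  case (scl x a) thus ?case by (simp add: sc_multl tau_sc)
qed

lemma in_closureI: "(\<forall>k. h k \<in> S) \<Longrightarrow> h \<longlonglongrightarrow> (l::'a) \<Longrightarrow> l \<in> closure S"
  unfolding closure_sequential by blast

lemma closure_GD: "star_subalgebra sc st (closure (GD q))"
  unfolding star_subalgebra_def
proof (intro conjI ballI allI)
  show "0 \<in> closure (GD q)" using GD_0 closure_subset by blast
next
  fix x y assume x: "x \<in> closure (GD q)" and y: "y \<in> closure (GD q)"
  obtain f where f: "\<forall>k. f k \<in> GD q" "f \<longlonglongrightarrow> x" using x closure_sequential by blast
  obtain g where g: "\<forall>k. g k \<in> GD q" "g \<longlonglongrightarrow> y" using y closure_sequential by blast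
  have "(\<lambda>k. f k + g k) \<longlonglongrightarrow> x + y" using f g by (intro tendsto_add) auto
  moreover have "\<forall>k. f k + g k \<in> GD q" using f g by (simp add: GD.add)
  ultimately show "x + y \<in> closure (GD q)" by (intro in_closureI)
  have "(\<lambda>k. f k * g k) \<longlonglongrightarrow> x * y" using f g by (intro tendsto_mult) auto
  moreover have "\<forall>k. f k * g k \<in> GD q" using f g by (simp add: GD_mult)
  ultimately show "x * y \<in> closure (GD q)" by (intro in_closureI)
next
  fix a x assume x: "x \<in> closure (GD q)"
  obtain f where f: "\<forall>k. f k \<in> GD q" "f \<longlonglongrightarrow> x" using x closure_sequential by blast
  have "(\<lambda>k. sc a (f k)) \<longlonglongrightarrow> sc a x" using f bounded_linear.tendsto[OF bl_sc] by blast
  moreover have "\<forall>k. sc a (f k) \<in> GD q" using f by (simp add: GD.scl)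
  ultimately show "sc a x \<in> closure (GD q)" by (intro in_closureI)
next
  fix x assume x: "x \<in> closure (GD q)"
  obtain f where f: "\<forall>k. f k \<in> GD q" "f \<longlonglongrightarrow> x" using x closure_sequential by blast
  have "(\<lambda>k. st (f k)) \<longlonglongrightarrow> st x" using f bounded_linear.tendsto[OF bl_st] by blast
  moreover have "\<forall>k. st (f k) \<in> GD q" using f by (simp add: GD_st)
  ultimately show "st x \<in> closure (GD q)" by (intro in_closureI)
qed

lemma main_loc:
  assumes q: "q dvd int n" and k: "0 < k" "int k < q" and S: "S \<subseteq> GD q"
    and x: "x \<in> cstar_gen sc st S"
  shows "\<tau> (x * uu ^ k) = 0 \<and> \<tau> (uu ^ k * x) = 0"
proof -
  have "cstar_gen sc st S \<subseteq> closure (GD q)"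
    unfolding cstar_gen_def using closure_GD S closure_subset by (intro Inter_lower) blast
  hence xc: "x \<in> closure (GD q)" using x by blast
  have cont: "continuous_on UNIV (\<lambda>x. \<tau> (x * uu ^ k))"
  proof -
    have "continuous_on UNIV (\<lambda>x. x * uu ^ k)" by (intro continuous_intros)
    hence "continuous_on UNIV (\<tau> \<circ> (\<lambda>x. x * uu ^ k))"
      by (rule continuous_on_compose) (rule continuous_on_subset[OF tau_cont], simp)
    thus ?thesis by (simp add: comp_def)
  qed
  have "closed {x. \<tau> (x * uu ^ k) = 0}"
    using closed_Collect_eq[OF cont continuous_on_const] .
  moreover have "GD q \<subseteq> {x. \<tau> (x * uu ^ k) = 0}" using GD_tau[OF q k] by blast
  ultimately have "closure (GD q) \<subseteq> {x. \<tau> (x * uu ^ k) = 0}" by (rule closure_minimal[rotated])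
  hence "\<tau> (x * uu ^ k) = 0" using xc by blast
  thus ?thesis using tau_comm by metis
qed

lemma gen_conj:
  assumes "j \<in> {1..m}"
  shows "uu ^ k * p j * st uu ^ k \<in> GD q"
proof -
  let ?ys = "replicate k (False, uu, 1) @ [(True, p j, 0)] @ replicate k (False, st uu, -1)"
  have "prd ?ys \<in> GD q"
  proof (rule GD.word)
    have "p j \<in> V True 0" using pv_p[OF assms] unfolding V_def by auto
    moreover have "st uu \<in> V False (-1)" using V_st[OF uu_V] by simp
    ultimately show "\<forall>y\<in>set ?ys. valid y" using uu_V by (auto simp: valid_def)
    show "q dvd dsum ?ys" by (simp add: dsum_rep)
  qed
  thus ?thesis by (simp add: prd_rep mult.assoc)
qed

lemma gen_e:
  assumes i: "i \<in> {1..n}"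
  shows "e i i \<in> GD q"
proof -
  have "homog 0 (\<lambda>a b. if a = i then (if b = i then 1 else 0) else 0)"
    unfolding homog_def by auto
  hence "e i i \<in> V False 0" using e_mat[OF i i] unfolding V_def by auto
  hence "prd [(False, e i i, 0)] \<in> GD q" by (intro GD.word) (auto simp: valid_def)
  thus ?thesis by simp
qed

lemma gen_pow: "uu ^ (l * t) \<in> GD (int l)"
proof -
  have "prd (replicate (l * t) (False, uu, 1)) \<in> GD (int l)"
    using uu_V by (intro GD.word) (auto simp: valid_def dsum_rep)
  thus ?thesis by (simp add: prd_rep)
qed

end

theorem corollary3p2:
  fixes sc :: "complex \<Rightarrow> 'a::{banach,real_normed_algebra_1} \<Rightarrow> 'a"
    and st :: "'a \<Rightarrow> 'a" and \<tau> :: "'a \<Rightarrow> complex"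
    and n m :: nat and \<alpha> :: "nat \<Rightarrow> real"
    and p :: "nat \<Rightarrow> 'a" and e :: "nat \<Rightarrow> nat \<Rightarrow> 'a"
  assumes cstar: "cstar_algebra sc st"
    and state: "faithful_tracial_state sc st \<tau>"
    and tau_cont: "continuous_on UNIV \<tau>"
    and n2: "n \<ge> 2" and m1: "m \<ge> 1"
    and alpha_pos: "\<forall>j\<in>{1..m}. 0 < \<alpha> j"
    and alpha_mono: "\<forall>j\<in>{1..m}. \<forall>j'\<in>{1..m}. j \<le> j' \<longrightarrow> \<alpha> j \<le> \<alpha> j'"
    and alpha_sum: "(\<Sum>j=1..m. \<alpha> j) = 1"
    and p_proj: "\<forall>j\<in>{1..m}. st (p j) = p j \<and> p j * p j = p j"
    and p_orth: "\<forall>j\<in>{1..m}. \<forall>j'\<in>{1..m}. j \<noteq> j' \<longrightarrow> p j * p j' = 0"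
    and p_sum: "(\<Sum>j=1..m. p j) = 1"
    and tau_p: "\<forall>j\<in>{1..m}. \<tau> (p j) = complex_of_real (\<alpha> j)"
    and e_mult: "\<forall>i\<in>{1..n}. \<forall>j\<in>{1..n}. \<forall>k\<in>{1..n}. \<forall>l\<in>{1..n}.
                   e i j * e k l = (if j = k then e i l else 0)"
    and e_star: "\<forall>i\<in>{1..n}. \<forall>j\<in>{1..n}. st (e i j) = e j i"
    and e_sum: "(\<Sum>i=1..n. e i i) = 1"
    and tau_e: "\<forall>i\<in>{1..n}. \<forall>j\<in>{1..n}. \<tau> (e i j) = (if i = j then 1 / of_nat n else 0)"
    and free: "free_pair \<tau> {(\<Sum>j=1..m. sc (c j) (p j)) | c. True}
                           {(\<Sum>i=1..n. \<Sum>j=1..n. sc (c i j) (e i j)) | c. True}"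
    and generated: "cstar_gen sc st ({p j | j. j \<in> {1..m}} \<union> {e i j | i j. i \<in> {1..n} \<and> j \<in> {1..n}}) = UNIV"
  defines "u \<equiv> (\<Sum>i=1..n-1. e i (i + 1)) + e n 1"
  defines "B \<equiv> cstar_gen sc st
             ({u ^ k * p j * st u ^ k | k j. k \<le> n - 1 \<and> j \<in> {1..m}} \<union> {e i i | i. i \<in> {1..n}})"
  shows "(\<forall>b\<in>B. \<forall>k. 0 < k \<and> k \<le> n - 1 \<longrightarrow> \<tau> (b * u ^ k) = 0 \<and> \<tau> (u ^ k * b) = 0) \<and>
         (\<forall>l::nat. l dvd n \<and> 1 < l \<and> l < n \<longrightarrow>
            (let E = cstar_gen sc st
                ({u ^ k * p j * st u ^ k | k j. k \<le> l - 1 \<and> j \<in> {1..m}} \<union> {e i i | i. i \<in> {1..n}}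
                 \<union> {u ^ (l * t) | t. 1 \<le> t \<and> t \<le> n div l - 1})
             in \<forall>x\<in>E. \<forall>k. 0 < k \<and> k \<le> l - 1 \<longrightarrow> \<tau> (x * u ^ k) = 0 \<and> \<tau> (u ^ k * x) = 0))"
proof -
  interpret fp sc st \<tau> n m p e
    using cstar state tau_cont n2 p_proj p_orth p_sum e_mult e_star e_sum tau_e free
    by (simp add: fp_def)
  have u: "u = uu" unfolding u_def uu_def ..
  have part1: "\<forall>b\<in>B. \<forall>k. 0 < k \<and> k \<le> n - 1 \<longrightarrow> \<tau> (b * u ^ k) = 0 \<and> \<tau> (u ^ k * b) = 0"
  proof (intro ballI allI impI)
    fix b k assume b: "b \<in> B" and k: "0 < k \<and> k \<le> n - 1"
    have S: "{u ^ k * p j * st u ^ k | k j. k \<le> n - 1 \<and> j \<in> {1..m}} \<union> {e i i | i. i \<in> {1..n}} \<subseteq> GD (int n)"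
      unfolding u using gen_conj gen_e by blast
    show "\<tau> (b * u ^ k) = 0 \<and> \<tau> (u ^ k * b) = 0"
      unfolding u using main_loc[OF _ _ _ S[unfolded u]] b k n2 unfolding B_def u by auto
  qed
  have part2: "\<forall>l::nat. l dvd n \<and> 1 < l \<and> l < n \<longrightarrow>
            (let E = cstar_gen sc st
                ({u ^ k * p j * st u ^ k | k j. k \<le> l - 1 \<and> j \<in> {1..m}} \<union> {e i i | i. i \<in> {1..n}}
                 \<union> {u ^ (l * t) | t. 1 \<le> t \<and> t \<le> n div l - 1})
             in \<forall>x\<in>E. \<forall>k. 0 < k \<and> k \<le> l - 1 \<longrightarrow> \<tau> (x * u ^ k) = 0 \<and> \<tau> (u ^ k * x) = 0)"
    unfolding Let_def
  proof (intro allI impI ballI)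
    fix l :: nat and x k
    assume l: "l dvd n \<and> 1 < l \<and> l < n" and k: "0 < k \<and> k \<le> l - 1"
      and x: "x \<in> cstar_gen sc st
                ({u ^ k * p j * st u ^ k | k j. k \<le> l - 1 \<and> j \<in> {1..m}} \<union> {e i i | i. i \<in> {1..n}}
                 \<union> {u ^ (l * t) | t. 1 \<le> t \<and> t \<le> n div l - 1})"
    have S: "{uu ^ k * p j * st uu ^ k | k j. k \<le> l - 1 \<and> j \<in> {1..m}} \<union> {e i i | i. i \<in> {1..n}}
                 \<union> {uu ^ (l * t) | t. 1 \<le> t \<and> t \<le> n div l - 1} \<subseteq> GD (int l)"
      using gen_conj gen_e gen_pow by blast
    have q: "int l dvd int n" using l by simp
    have kk: "0 < k" "int k < int l" using k l by auto
    show "\<tau> (x * u ^ k) = 0 \<and> \<tau> (u ^ k * x) = 0"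
      using main_loc[OF q kk S] x unfolding u by blast
  qed
  show ?thesis using part1 part2 by blast
qed

end
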